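(* Let $\widehat{\mathscr{O}}$ be a commutative local principal ideal ring, complete with respect to its maximal ideal $\mathfrak{m}=(\pi)$, whose residue field $k$ has characteristic different from $2$. Let $A\in \mathrm{GL}_n(\widehat{\mathscr{O}})$, and denote by $\overline{A}\in\mathrm{M}_n(k)$ its reduction modulo $\mathfrak m$. Assume that there exists a monic polynomial $F(t)\in \widehat{\mathscr{O}}[t]$ with $F(A)=0$ such that $$\deg\bigl(\overline{F}(t)\bigr)=\deg\bigl(\mathrm{Min}_{k,\overline{A}}(t)\bigr),$$ where $\overline{F}$ is the reduction of $F$ modulo $\mathfrak m$ and $\mathrm{Min}_{k,\overline{A}}$ is the minimal polynomial of $\overline{A}$ over $k$. Then, for every $i\in\mathbb{N}$, the null ideal $$N^{\mathscr{O}_{i+1}}_{A_{i+1}}=\{G(t)\in\mathscr{O}_{i+1}[t]: G(A_{i+1})=0\}$$ is principal and is generated by $F_{i+1}(t)$, where $\mathscr{O}_{i}=\widehat{\mathscr{O}}/\pi^{i}\widehat{\mathscr{O}}$, and $A_{i}$, $F_{i}(t)$ denote the images of $A$ and $F(t)$ under the reduction $\widehat{\mathscr{O}}\to\mathscr{O}_{i}$.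
   Context: A commutative ring $\mathscr R$ is complete with respect to an ideal $I$ if the canonical map $\mathscr R\to\varprojlim_j \mathscr R/I^j$ is an isomorphism. For $\ell\ge1$, $\mathscr{O}_\ell=\widehat{\mathscr{O}}/\pi^\ell\widehat{\mathscr{O}}$; reductions of elements, matrices and polynomials from $\widehat{\mathscr{O}}$ to $\mathscr{O}_\ell$ are applied entrywise/coefficientwise. For a commutative ring $\mathscr R$ and $X\in\mathrm{M}_n(\mathscr R)$, the null ideal is $N^{\mathscr R}_X=\{G\in\mathscr R[t]:G(X)=0\}$. *)

theory Defs
  imports "HOL-Analysis.Analysis" "HOL-Computational_Algebra.Polynomial"
begin

definition is_ideal :: "'a::comm_ring_1 set \<Rightarrow> bool" where
  "is_ideal I \<longleftrightarrow> 0 \<in> I \<and> (\<forall>x\<in>I. \<forall>y\<in>I. x + y \<in> I) \<and> (\<forall>r. \<forall>x\<in>I. r * x \<in> I)"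

definition principal_ideal :: "'a::comm_ring_1 \<Rightarrow> 'a set" where
  "principal_ideal g = {x. g dvd x}"

definition is_principal_ideal_ring :: "'a::comm_ring_1 itself \<Rightarrow> bool" where
  "is_principal_ideal_ring _ \<longleftrightarrow> (\<forall>I::'a set. is_ideal I \<longrightarrow> (\<exists>g. I = principal_ideal g))"

definition is_maximal_ideal :: "'a::comm_ring_1 set \<Rightarrow> bool" where
  "is_maximal_ideal M \<longleftrightarrow> is_ideal M \<and> M \<noteq> UNIV \<and>
     (\<forall>J. is_ideal J \<and> M \<subseteq> J \<longrightarrow> J = M \<or> J = UNIV)"

definition is_local_ring :: "'a::comm_ring_1 itself \<Rightarrow> bool" where
  "is_local_ring _ \<longleftrightarrow> (\<exists>!M::'a set. is_maximal_ideal M)"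

text \<open>Completeness with respect to the ideal (\<pi>): the canonical map
  R \<rightarrow> lim R/(\<pi>^j) is injective (intersection of all (\<pi>^j) is 0) and surjective
  (every compatible family, represented by lifts s j with s (j+1) \<equiv> s j mod \<pi>^j,
  comes from an element x with x \<equiv> s j mod \<pi>^j for all j). Note (\<pi>)^j = (\<pi>^j).\<close>
definition complete_wrt_principal :: "'a::comm_ring_1 \<Rightarrow> bool" where
  "complete_wrt_principal \<pi> \<longleftrightarrow>
     (\<forall>x. (\<forall>j. \<pi> ^ j dvd x) \<longrightarrow> x = 0) \<and>
     (\<forall>s::nat \<Rightarrow> 'a. (\<forall>j. \<pi> ^ j dvd (s (Suc j) - s j)) \<longrightarrow>
        (\<exists>x. \<forall>j. \<pi> ^ j dvd (x - s j)))"

definition mat_pow :: "'a::comm_ring_1 ^'n^'n \<Rightarrow> nat \<Rightarrow> 'a ^'n^'n" where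
  "mat_pow A k = (((**) A) ^^ k) (mat 1)"

definition poly_mat :: "'a::comm_ring_1 poly \<Rightarrow> 'a ^'n^'n \<Rightarrow> 'a ^'n^'n" where
  "poly_mat p A = (\<chi> i j. \<Sum>k\<le>degree p. coeff p k * (mat_pow A k $ i $ j))"

definition mat_zero_mod :: "'a::comm_ring_1 \<Rightarrow> 'a ^'n^'n \<Rightarrow> bool" where
  "mat_zero_mod q M \<longleftrightarrow> (\<forall>i j. q dvd M $ i $ j)"

definition poly_cong_mod :: "'a::comm_ring_1 \<Rightarrow> 'a poly \<Rightarrow> 'a poly \<Rightarrow> bool" where
  "poly_cong_mod q G H \<longleftrightarrow> (\<forall>k. q dvd coeff (G - H) k)"

text \<open>Degree of the reduction of F modulo (\<pi>) (0 if the reduction is 0).\<close>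
definition degree_mod :: "'a::comm_ring_1 \<Rightarrow> 'a poly \<Rightarrow> nat" where
  "degree_mod \<pi> F = (if \<forall>k. \<pi> dvd coeff F k then 0 else GREATEST k. \<not> \<pi> dvd coeff F k)"

text \<open>Degree of the minimal polynomial over k = R/(\<pi>) of the reduction of A:
  the least degree of a monic polynomial over k annihilating the reduction of A.
  Monic polynomials over k of degree d are exactly reductions of monic polynomials
  over R of degree d, and reduction commutes with evaluation.\<close>
definition min_poly_degree_mod :: "'a::comm_ring_1 \<Rightarrow> 'a ^'n^'n \<Rightarrow> nat" where
  "min_poly_degree_mod \<pi> A =
     (LEAST d. \<exists>G. lead_coeff G = 1 \<and> degree G = d \<and> mat_zero_mod \<pi> (poly_mat G A))"

text \<open>The null ideal of A_q = A mod q in (R/qR)[t], represented by the set of all lifts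
  to R[t] of its elements.\<close>
definition null_ideal_mod :: "'a::comm_ring_1 \<Rightarrow> 'a ^'n^'n \<Rightarrow> 'a poly set" where
  "null_ideal_mod q A = {G. mat_zero_mod q (poly_mat G A)}"

text \<open>The principal ideal of (R/qR)[t] generated by F mod q, represented by all lifts.\<close>
definition principal_poly_ideal_mod :: "'a::comm_ring_1 \<Rightarrow> 'a poly \<Rightarrow> 'a poly set" where
  "principal_poly_ideal_mod q F = {G. \<exists>H. poly_cong_mod q G (H * F)}"

end

theory Submission
  imports Defs
begin

definition smat :: "'a::comm_ring_1 \<Rightarrow> 'a ^'n^'n \<Rightarrow> 'a ^'n^'n" (infixr "*m" 75) where
  "smat c M = (\<chi> i j. c * M$i$j)"

lemma smat_comp[simp]: "(c *m M) $ i $ j = c * M $ i $ j" by (simp add: smat_def)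
lemma smat_0[simp]: "0 *m M = 0" by (simp add: vec_eq_iff)

definition ev :: "'a::comm_ring_1 ^'n^'n \<Rightarrow> 'a poly \<Rightarrow> 'a ^'n^'n" where
  "ev A p = (\<Sum>k\<le>degree p. coeff p k *m mat_pow A k)"

lemma poly_mat_ev: "poly_mat p A = ev A p"
  by (simp add: poly_mat_def ev_def vec_eq_iff)

lemma mat_pow_0: "mat_pow A 0 = mat 1" by (simp add: mat_pow_def)
lemma mat_pow_Suc: "mat_pow A (Suc k) = A ** mat_pow A k" by (simp add: mat_pow_def)

lemma ev_bound: "degree p \<le> N \<Longrightarrow> ev A p = (\<Sum>k\<le>N. coeff p k *m mat_pow A k)"
  unfolding ev_def
  by (rule sum.mono_neutral_left) (auto simp: coeff_eq_0)

lemma ev_add: "ev A (p + q) = ev A p + ev A q"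
proof -
  let ?N = "max (degree p) (degree q)"
  have "ev A (p+q) = (\<Sum>k\<le>?N. coeff (p+q) k *m mat_pow A k)"
    by (rule ev_bound) (simp add: degree_add_le)
  also have "\<dots> = (\<Sum>k\<le>?N. coeff p k *m mat_pow A k) + (\<Sum>k\<le>?N. coeff q k *m mat_pow A k)"
    by (simp add: sum.distrib[symmetric] vec_eq_iff algebra_simps)
  also have "\<dots> = ev A p + ev A q"
    by (simp add: ev_bound[symmetric])
  finally show ?thesis .
qed

lemma ev_diff: "ev A (p - q) = ev A p - ev A q"
  by (metis add_diff_cancel diff_add_cancel ev_add)

lemma ev_smult: "ev A (smult c p) = c *m ev A p"
proof -
  have "ev A (smult c p) = (\<Sum>k\<le>degree p. coeff (smult c p) k *m mat_pow A k)"
    by (rule ev_bound) (simp add: degree_smult_le)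
  then show ?thesis by (simp add: ev_def vec_eq_iff sum_distrib_left algebra_simps)
qed

lemma ev_0: "ev A 0 = 0" by (simp add: ev_def)

lemma mm_sum: "finite S \<Longrightarrow> (B::'a::comm_ring_1^'n^'n) ** sum f S = (\<Sum>k\<in>S. B ** f k)"
  by (induction S rule: finite_induct) (auto simp: matrix_add_ldistrib)

lemma mm_smult_r: "(B::'a::comm_ring_1^'n^'n) ** (c *m M) = c *m (B ** M)"
  by (simp add: matrix_matrix_mult_def vec_eq_iff sum_distrib_left algebra_simps)

lemma mm_smult_l: "(c *m (B::'a::comm_ring_1^'n^'n)) ** M = c *m (B ** M)"
  by (simp add: matrix_matrix_mult_def vec_eq_iff sum_distrib_left algebra_simps)

lemma mm_add_r: "((B::'a::comm_ring_1^'n^'n) + C) ** M = B ** M + C ** M"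
  by (simp add: matrix_matrix_mult_def vec_eq_iff sum.distrib algebra_simps)

lemma ev_pCons: "ev A (pCons a p) = a *m mat 1 + A ** ev A p"
proof -
  have "ev A (pCons a p) = (\<Sum>k\<le>Suc (degree p). coeff (pCons a p) k *m mat_pow A k)"
    by (rule ev_bound) (simp add: degree_pCons_le)
  also have "\<dots> = a *m mat 1 + (\<Sum>k\<le>degree p. coeff p k *m (A ** mat_pow A k))"
    by (simp add: sum.atMost_Suc_shift mat_pow_0 mat_pow_Suc del: sum.atMost_Suc)
  also have "\<dots> = a *m mat 1 + A ** ev A p"
    by (simp add: ev_def mm_sum mm_smult_r)
  finally show ?thesis .
qed

lemma ev_mult: "ev A (p * q) = ev A p ** ev A q"
proof (induction p rule: pCons_induct)
  case 0
  then show ?case by (simp add: ev_0)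
next
  case (pCons a p)
  have "ev A (pCons a p * q) = a *m ev A q + A ** ev A (p * q)"
    using ev_pCons[of A 0 "p*q"] by (simp add: ev_add ev_smult)
  also have "\<dots> = ev A (pCons a p) ** ev A q"
    by (simp add: ev_pCons pCons.IH mm_add_r mm_smult_l matrix_mul_assoc)
  finally show ?case .
qed

lemma mzm_add: "mat_zero_mod q M \<Longrightarrow> mat_zero_mod q N \<Longrightarrow> mat_zero_mod q (M + N)"
  by (simp add: mat_zero_mod_def)
lemma mzm_diff: "mat_zero_mod q M \<Longrightarrow> mat_zero_mod q N \<Longrightarrow> mat_zero_mod q (M - N)"
  by (simp add: mat_zero_mod_def)
lemma mzm_smult: "mat_zero_mod q M \<Longrightarrow> mat_zero_mod q (c *m M)"
  by (simp add: mat_zero_mod_def)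

lemma mzm_coeffs: "(\<forall>k. q dvd coeff P k) \<Longrightarrow> mat_zero_mod q (ev A P)"
  by (simp add: mat_zero_mod_def ev_def dvd_sum)


lemma geom_inv:
  fixes \<pi> b :: "'a::comm_ring_1"
  assumes complete: "complete_wrt_principal \<pi>"
  shows "\<exists>w. (1 - b * \<pi>) * w = 1"
proof -
  define s where "s j = (\<Sum>i<j. (b*\<pi>)^i)" for j
  have "\<forall>j. \<pi> ^ j dvd (s (Suc j) - s j)"
    by (simp add: s_def power_mult_distrib)
  then obtain x where x: "\<forall>j. \<pi> ^ j dvd (x - s j)"
    using complete unfolding complete_wrt_principal_def by blast
  have "\<pi> ^ j dvd ((1 - b*\<pi>) * x - 1)" for j
  proof -
    have e: "(1 - b*\<pi>) * x - 1 = (1 - b*\<pi>) * (x - s j) - (b*\<pi>)^j"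
      using one_diff_power_eq[of "b*\<pi>" j] by (simp add: s_def algebra_simps)
    show ?thesis unfolding e
      by (intro dvd_diff dvd_mult x[rule_format]) (simp add: power_mult_distrib)
  qed
  then have "(1 - b*\<pi>) * x - 1 = 0"
    using complete unfolding complete_wrt_principal_def by blast
  then show ?thesis by auto
qed

lemma unit_lemma:
  fixes \<pi> x :: "'a::comm_ring_1"
  assumes complete: "complete_wrt_principal \<pi>"
    and maxl: "is_maximal_ideal (principal_ideal \<pi>)"
    and nd: "\<not> \<pi> dvd x"
  shows "\<exists>y. x * y = 1"
proof -
  define J where "J = {a*x + b*\<pi> | a b. True}"
  have "is_ideal J"
    unfolding is_ideal_def J_def
  proof (intro conjI ballI allI)
    show "0 \<in> {a * x + b * \<pi> |a b. True}" by (rule CollectI, rule exI[of _ 0], rule exI[of _ 0], auto)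
  next
    fix u v assume "u \<in> {a * x + b * \<pi> |a b. True}" "v \<in> {a * x + b * \<pi> |a b. True}"
    then obtain a b c d where "u = a*x+b*\<pi>" "v = c*x+d*\<pi>" by blast
    then have "u + v = (a+c)*x + (b+d)*\<pi>" by (simp add: algebra_simps)
    then show "u + v \<in> {a * x + b * \<pi> |a b. True}" by blast
  next
    fix r u assume "u \<in> {a * x + b * \<pi> |a b. True}"
    then obtain a b where "u = a*x+b*\<pi>" by blast
    then have "r * u = (r*a)*x + (r*b)*\<pi>" by (simp add: algebra_simps)
    then show "r * u \<in> {a * x + b * \<pi> |a b. True}" by blast
  qed
  moreover have "principal_ideal \<pi> \<subseteq> J"
  proof
    fix u assume "u \<in> principal_ideal \<pi>"
    then obtain c where "u = \<pi> * c" by (auto simp: principal_ideal_def)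
    then have "u = 0 * x + c * \<pi>" by simp
    then show "u \<in> J" unfolding J_def by blast
  qed
  moreover have "J \<noteq> principal_ideal \<pi>"
  proof
    assume "J = principal_ideal \<pi>"
    moreover have "x \<in> J" unfolding J_def by (rule CollectI, rule exI[of _ 1], rule exI[of _ 0], simp)
    ultimately show False using nd by (simp add: principal_ideal_def)
  qed
  ultimately have "J = UNIV" using maxl unfolding is_maximal_ideal_def by blast
  then obtain a b where ab: "1 = a*x + b*\<pi>" unfolding J_def by blast
  obtain w where w: "(1 - b*\<pi>) * w = 1" using geom_inv[OF complete] by blast
  have "a*x = 1 - b*\<pi>" using ab by (simp add: algebra_simps)
  then have "x * (a * w) = (1 - b*\<pi>) * w" by (metis mult.assoc mult.commute)
  then show ?thesis using w by metis
qed

lemma pi_nonunit: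
  fixes \<pi> :: "'a::comm_ring_1"
  assumes maxl: "is_maximal_ideal (principal_ideal \<pi>)"
  shows "\<not> \<pi> dvd 1"
proof
  assume "\<pi> dvd 1"
  then have "principal_ideal \<pi> = UNIV"
    by (auto simp: principal_ideal_def intro: dvd_trans)
  then show False using maxl by (simp add: is_maximal_ideal_def)
qed

lemma cancel_lemma:
  fixes \<pi> x :: "'a::comm_ring_1"
  assumes complete: "complete_wrt_principal \<pi>"
    and maxl: "is_maximal_ideal (principal_ideal \<pi>)"
    and dv: "\<pi> ^ Suc k dvd \<pi> ^ k * x"
    and nz: "\<pi> ^ k \<noteq> 0"
  shows "\<pi> dvd x"
proof (rule ccontr)
  assume "\<not> \<pi> dvd x"
  then obtain y where y: "x * y = 1" using unit_lemma[OF complete maxl] by blast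
  obtain c where c: "\<pi> ^ k * x = \<pi> ^ Suc k * c" using dv by (auto elim: dvdE)
  have "\<pi> ^ k = \<pi> ^ k * (x * y)" using y by simp
  also have "\<dots> = \<pi> ^ k * x * y" by (simp add: algebra_simps)
  also have "\<dots> = \<pi> ^ k * (\<pi> * (c * y))" using c by (simp add: algebra_simps)
  finally have "\<pi> ^ k * (1 - (c*y) * \<pi>) = 0" by (simp add: algebra_simps)
  moreover obtain w where w: "(1 - (c*y) * \<pi>) * w = 1" using geom_inv[OF complete] by blast
  ultimately have "\<pi> ^ k * ((1 - (c*y) * \<pi>) * w) = 0" by (metis mult.assoc mult_zero_left)
  then show False using w nz by simp
qed


lemma monic_div:
  fixes F G :: "'a::comm_ring_1 poly"
  assumes monic: "lead_coeff F = 1"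
  shows "\<exists>Q R. G = Q*F + R \<and> (\<forall>j\<ge>degree F. coeff R j = 0)"
proof (induction "degree G" arbitrary: G rule: less_induct)
  case less
  show ?case
  proof (cases "degree G < degree F")
    case True
    then have "G = 0*F + G \<and> (\<forall>j\<ge>degree F. coeff G j = 0)" by (simp add: coeff_eq_0)
    then show ?thesis by blast
  next
    case False
    define n where "n = degree G"
    define M where "M = monom (lead_coeff G) (n - degree F)"
    define G' where "G' = G - M * F"
    have c: "coeff G' j = 0" if "j \<ge> n" for j
    proof (cases "j = n")
      case True
      then show ?thesis using False monic
        by (simp add: G'_def M_def coeff_monom_mult n_def)
    next
      case False
      then have "j > n" using that by simp
      then have "coeff G j = 0" "coeff F (j - (n - degree F)) = 0"
        using \<open>\<not> degree G < degree F\<close> by (auto simp: n_def coeff_eq_0)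
      then show ?thesis
        by (simp add: G'_def M_def coeff_monom_mult)
    qed
    show ?thesis
    proof (cases "G' = 0")
      case True
      then have "G = M*F + 0 \<and> (\<forall>j\<ge>degree F. coeff 0 j = 0)" by (simp add: G'_def)
      then show ?thesis by blast
    next
      case False
      then have "coeff G' (degree G') \<noteq> 0" by simp
      then have "degree G' < degree G" using c unfolding n_def by (meson not_le)
      then obtain Q R where QR: "G' = Q*F + R" "\<forall>j\<ge>degree F. coeff R j = 0"
        using less by blast
      then have "G = (Q + M)*F + R" by (simp add: G'_def algebra_simps)
      then show ?thesis using QR by blast
    qed
  qed
qed

lemma main_L:
  fixes \<pi> :: "'a::comm_ring_1" and A :: "'a^'n^'n"
  assumes complete: "complete_wrt_principal \<pi>"
    and maxl: "is_maximal_ideal (principal_ideal \<pi>)"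
    and mindeg: "\<And>G. lead_coeff G = 1 \<Longrightarrow> mat_zero_mod \<pi> (ev A G) \<Longrightarrow> d \<le> degree G"
    and hR: "\<forall>j\<ge>d. coeff R j = 0"
    and hz: "mat_zero_mod (\<pi>^m) (ev A R)"
  shows "\<forall>j. \<pi>^m dvd coeff R j"
proof -
  have one: "(1::'a) \<noteq> 0" using pi_nonunit[OF maxl] by auto
  have "k \<le> m \<Longrightarrow> \<forall>j. \<pi>^k dvd coeff R j" for k
  proof (induction k)
    case 0
    then show ?case by simp
  next
    case (Suc k)
    then have IH: "\<forall>j. \<pi>^k dvd coeff R j" by simp
    show ?case
    proof (cases "\<pi>^k = 0")
      case True
      then show ?thesis using IH by simp
    next
      case nz: False
      from IH have "\<forall>j. \<exists>c. coeff R j = \<pi>^k * c" by (auto elim: dvdE)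
      then obtain c where c: "\<And>j. coeff R j = \<pi>^k * c j" by metis
      define R' where "R' = (\<Sum>j<d. monom (c j) j)"
      have cR': "coeff R' j = (if j < d then c j else 0)" for j
        by (simp add: R'_def coeff_sum coeff_monom)
      have "R = smult (\<pi>^k) R'"
        by (rule poly_eqI) (use hR c in \<open>auto simp: cR'\<close>)
      then have evR: "ev A R = \<pi>^k *m ev A R'" by (simp add: ev_smult)
      have z1: "mat_zero_mod \<pi> (ev A R')"
        unfolding mat_zero_mod_def
      proof (intro allI)
        fix i j
        have "\<pi>^m dvd \<pi>^k * ev A R' $ i $ j"
          using hz evR by (simp add: mat_zero_mod_def)
        moreover have "\<pi>^Suc k dvd \<pi>^m" using Suc.prems by (rule le_imp_power_dvd)
        ultimately have "\<pi>^Suc k dvd \<pi>^k * ev A R' $ i $ j" using dvd_trans by blast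
        then show "\<pi> dvd ev A R' $ i $ j" using cancel_lemma[OF complete maxl _ nz] by blast
      qed
      have alld: "\<forall>j<d. \<pi> dvd c j"
      proof (rule ccontr)
        assume "\<not> (\<forall>j<d. \<pi> dvd c j)"
        then have ex: "\<exists>j. j < d \<and> \<not> \<pi> dvd c j" by blast
        define e where "e = (GREATEST j. j < d \<and> \<not> \<pi> dvd c j)"
        have bnd: "\<forall>j. j < d \<and> \<not> \<pi> dvd c j \<longrightarrow> j \<le> d" by simp
        have e1: "e < d \<and> \<not> \<pi> dvd c e"
          unfolding e_def using ex by (rule GreatestI_ex_nat[OF _ ]) (auto intro: less_imp_le)
        have e2: "\<And>j. j < d \<and> \<not> \<pi> dvd c j \<Longrightarrow> j \<le> e"
          unfolding e_def by (rule Greatest_le_nat[where b = d]) auto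
        obtain v where v: "c e * v = 1" using unit_lemma[OF complete maxl] e1 by blast
        define T where "T = (\<Sum>j\<le>e. monom (c j) j)"
        have cT: "coeff T j = (if j \<le> e then c j else 0)" for j
          by (simp add: T_def coeff_sum coeff_monom)
        define G where "G = smult v T"
        have cG: "coeff G j = (if j \<le> e then v * c j else 0)" for j
          by (simp add: G_def cT)
        have dG: "degree G = e"
        proof (rule antisym)
          show "degree G \<le> e" by (rule degree_le) (simp add: cG)
          show "e \<le> degree G" by (rule le_degree) (use v one in \<open>simp add: cG mult.commute\<close>)
        qed
        have lG: "lead_coeff G = 1" using dG v by (simp add: cG mult.commute)
        have "\<forall>j. \<pi> dvd coeff (R' - T) j"
        proof
          fix j
          show "\<pi> dvd coeff (R' - T) j"
          proof (cases "j \<le> e")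
            case True
            then show ?thesis using e1 by (simp add: cR' cT)
          next
            case False
            then show ?thesis using e2[of j] by (auto simp: cR' cT)
          qed
        qed
        then have "mat_zero_mod \<pi> (ev A (R' - T))" by (rule mzm_coeffs)
        then have "mat_zero_mod \<pi> (ev A T)"
          using z1 mzm_diff[of \<pi> "ev A R'" "ev A (R' - T)"] by (simp add: ev_diff)
        then have "mat_zero_mod \<pi> (ev A G)" by (simp add: G_def ev_smult mzm_smult)
        then have "d \<le> e" using mindeg[OF lG] dG by simp
        then show False using e1 by simp
      qed
      show ?thesis
      proof
        fix j
        show "\<pi>^Suc k dvd coeff R j"
        proof (cases "j < d")
          case True
          then obtain t where "c j = \<pi> * t" using alld by (auto elim: dvdE)
          then have "coeff R j = \<pi>^Suc k * t" by (simp add: c mult_ac)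
          then show ?thesis by simp
        next
          case False
          then show ?thesis using hR by simp
        qed
      qed
    qed
  qed
  then show ?thesis by simp
qed


theorem proposition2p2:
  fixes \<pi> :: "'a::comm_ring_1"
    and A :: "'a ^'n^'n"
    and F :: "'a poly"
  assumes local: "is_local_ring TYPE('a)"
    and pir: "is_principal_ideal_ring TYPE('a)"
    and maxl: "is_maximal_ideal (principal_ideal \<pi>)"
    and complete: "complete_wrt_principal \<pi>"
    and char_not_2: "\<not> \<pi> dvd 2"
    and GL: "invertible A"
    and monic: "lead_coeff F = 1"
    and annih: "poly_mat F A = 0"
    and deg: "degree_mod \<pi> F = min_poly_degree_mod \<pi> A"
  shows "\<forall>i::nat. null_ideal_mod (\<pi> ^ (i + 1)) A = principal_poly_ideal_mod (\<pi> ^ (i + 1)) F"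
proof
  fix i :: nat
  define q where "q = \<pi> ^ (i + 1)"
  have nu: "\<not> \<pi> dvd 1" using pi_nonunit[OF maxl] .
  have dm: "degree_mod \<pi> F = degree F"
  proof -
    have "\<not> (\<forall>k. \<pi> dvd coeff F k)" using monic nu by metis
    moreover have "(GREATEST k. \<not> \<pi> dvd coeff F k) = degree F"
    proof (rule Greatest_equality)
      show "\<not> \<pi> dvd coeff F (degree F)" using monic nu by simp
      show "y \<le> degree F" if "\<not> \<pi> dvd coeff F y" for y
        using that by (metis coeff_eq_0 dvd_0_right not_le)
    qed
    ultimately show ?thesis unfolding degree_mod_def by presburger
  qed
  have mindeg: "degree F \<le> degree G" if "lead_coeff G = 1" "mat_zero_mod \<pi> (ev A G)" for G
  proof -
    have "min_poly_degree_mod \<pi> A \<le> degree G"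
      unfolding min_poly_degree_mod_def
      by (rule Least_le) (use that in \<open>auto simp: poly_mat_ev\<close>)
    then show ?thesis using deg dm by simp
  qed
  have evF: "ev A F = 0" using annih by (simp add: poly_mat_ev)
  show "null_ideal_mod q A = principal_poly_ideal_mod q F"
  proof
    show "null_ideal_mod q A \<subseteq> principal_poly_ideal_mod q F"
    proof
      fix G assume "G \<in> null_ideal_mod q A"
      then have hG: "mat_zero_mod q (ev A G)" by (simp add: null_ideal_mod_def poly_mat_ev)
      obtain Q R where QR: "G = Q*F + R" "\<forall>j\<ge>degree F. coeff R j = 0"
        using monic_div[OF monic] by blast
      have "ev A R = ev A G" using QR(1) evF by (simp add: ev_add ev_mult)
      then have "mat_zero_mod (\<pi>^(i+1)) (ev A R)" using hG q_def by simp
      then have "\<forall>j. \<pi>^(i+1) dvd coeff R j"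
        using main_L[OF complete maxl mindeg QR(2)] by blast
      moreover have "G - Q*F = R" using QR(1) by simp
      ultimately have "poly_cong_mod q G (Q*F)" by (simp add: poly_cong_mod_def q_def)
      then show "G \<in> principal_poly_ideal_mod q F" by (auto simp: principal_poly_ideal_mod_def)
    qed
  next
    show "principal_poly_ideal_mod q F \<subseteq> null_ideal_mod q A"
    proof
      fix G assume "G \<in> principal_poly_ideal_mod q F"
      then obtain H where "poly_cong_mod q G (H*F)" by (auto simp: principal_poly_ideal_mod_def)
      then have "mat_zero_mod q (ev A (G - H*F))"
        by (intro mzm_coeffs) (simp add: poly_cong_mod_def)
      moreover have "ev A (G - H*F) = ev A G" using evF by (simp add: ev_diff ev_mult)
      ultimately show "G \<in> null_ideal_mod q A" by (simp add: null_ideal_mod_def poly_mat_ev)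
    qed
  qed
qed

end
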